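(* Let $G$ be a finite simple connected graph and let $C$ be a circuit of the toric ideal $I_G$ (i.e. $C\in\mathcal{C}_{A_G}$). Then $\operatorname{index}(C)=1$; consequently the true degree of $C$ equals its degree: $\operatorname{true\,deg}(C)=\deg(C)$.
   Context: Let $G$ be a finite simple connected graph with vertices $v_1,\dots,v_n$ and edges $e_1,\dots,e_m$. To each edge $e=\{v_i,v_j\}$ associate $a_e=\mathbf{v}_i+\mathbf{v}_j\in\mathbb{Z}^n$, where $\mathbf{v}_k$ denotes the $k$-th standard basis vector. Let $A_G=\{a_e : e\in E(G)\}$. For a finite set $A=\{\mathbf a_1,\dots,\mathbf a_m\}\subseteq\mathbb{N}^n$, the toric ideal $I_A\subseteq\mathbb{K}[x_1,\dots,x_m]$ ($\mathbb{K}$ a field) is the ideal generated by all binomials $\mathbf{x}^{\mathbf u}-\mathbf{x}^{\mathbf v}$ with $\mathbf u,\mathbf v\in\mathbb{N}^m$ and $\sum u_i\mathbf a_i=\sum v_i\mathbf a_i$; $I_G:=I_{A_G}$ in the polynomial ring $\mathbb{K}[e_1,\dots,e_m]$. A circuit of $I_A$ is an irreducible binomial $\mathbf{x}^{\mathbf u}-\mathbf{x}^{\mathbf v}\in I_A$ whose support (set of variables appearing) is minimal with respect to inclusion among nonzero binomials of $I_A$; $\mathcal{C}_A$ denotes the set of circuits. The support $\operatorname{supp}(C)$ of a circuit is regarded as the subset $\{\mathbf a_i : x_i \text{ appears in } C\}\subseteq A$. The index of $C$ is the (finite) index $\operatorname{index}(C)=[\,\mathbb{R}\operatorname{supp}(C)\cap\mathbb{Z}A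 : \mathbb{Z}\operatorname{supp}(C)\,]$, where $\mathbb{Z}A$ is the lattice generated by $A$. The degree of a binomial $\mathbf{x}^{\mathbf u}-\mathbf{x}^{\mathbf v}$ is the usual total degree (for $I_G$ all such binomials are homogeneous, so $\deg \mathbf{x}^{\mathbf u}=\deg\mathbf{x}^{\mathbf v}$). The true degree of a circuit $C$ is $\operatorname{true\,deg}(C)=\deg(C)\cdot\operatorname{index}(C)$. *)

theory Defs
  imports Complex_Main "HOL-Library.Poly_Mapping" "HOL-Computational_Algebra.Factorial_Ring"
begin

text \<open>A finite simple connected graph: vertices = the finite type 'v,
  edges = the finite type 'e, with endpoint map ends :: 'e => 'v set,
  each edge a 2-element set, distinct edges have distinct endpoint sets.\<close>

definition simple_connected_graph :: "('e \<Rightarrow> 'v set) \<Rightarrow> bool" where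
  "simple_connected_graph ends \<longleftrightarrow>
     finite (UNIV :: 'v set) \<and> finite (UNIV :: 'e set) \<and>
     inj ends \<and> (\<forall>e. card (ends e) = 2) \<and>
     (\<forall>x y. (\<lambda>a b. \<exists>e. ends e = {a, b})\<^sup>*\<^sup>* x y)"

definition edge_vec :: "('e \<Rightarrow> 'v set) \<Rightarrow> 'e \<Rightarrow> ('v \<Rightarrow> int)" where
  "edge_vec ends e = (\<lambda>i. if i \<in> ends e then 1 else 0)"

definition A_G :: "('e \<Rightarrow> 'v set) \<Rightarrow> ('v \<Rightarrow> int) set" where
  "A_G ends = range (edge_vec ends)"

text \<open>Polynomial ring K[e_1..e_m]: ('e =>0 nat) =>0 'k; monomial x^u.\<close>
definition monom_x :: "('e \<Rightarrow>\<^sub>0 nat) \<Rightarrow> (('e \<Rightarrow>\<^sub>0 nat) \<Rightarrow>\<^sub>0 'k::field)" where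
  "monom_x u = Poly_Mapping.single u 1"

definition binom_x :: "('e \<Rightarrow>\<^sub>0 nat) \<Rightarrow> ('e \<Rightarrow>\<^sub>0 nat) \<Rightarrow> (('e \<Rightarrow>\<^sub>0 nat) \<Rightarrow>\<^sub>0 'k::field)" where
  "binom_x u v = monom_x u - monom_x v"

definition weight :: "('e \<Rightarrow> ('v \<Rightarrow> int)) \<Rightarrow> ('e \<Rightarrow>\<^sub>0 nat) \<Rightarrow> ('v \<Rightarrow> int)" where
  "weight a u = (\<lambda>i. \<Sum>e\<in>Poly_Mapping.keys u. int (Poly_Mapping.lookup u e) * a e i)"

inductive_set toric_ideal :: "('e \<Rightarrow> ('v \<Rightarrow> int)) \<Rightarrow> (('e \<Rightarrow>\<^sub>0 nat) \<Rightarrow>\<^sub>0 'k::field) set"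
  for a where
  gen: "weight a u = weight a v \<Longrightarrow> binom_x u v \<in> toric_ideal a"
| zero: "0 \<in> toric_ideal a"
| add: "p \<in> toric_ideal a \<Longrightarrow> q \<in> toric_ideal a \<Longrightarrow> p + q \<in> toric_ideal a"
| mult: "p \<in> toric_ideal a \<Longrightarrow> r * p \<in> toric_ideal a"

definition toric_ideal_G :: "('e \<Rightarrow> 'v set) \<Rightarrow> (('e \<Rightarrow>\<^sub>0 nat) \<Rightarrow>\<^sub>0 'k::field) set" where
  "toric_ideal_G ends = toric_ideal (edge_vec ends)"

definition vars :: "(('e \<Rightarrow>\<^sub>0 nat) \<Rightarrow>\<^sub>0 'k::zero) \<Rightarrow> 'e set" where
  "vars p = \<Union> (Poly_Mapping.keys ` Poly_Mapping.keys p)"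

definition is_binomial :: "(('e \<Rightarrow>\<^sub>0 nat) \<Rightarrow>\<^sub>0 'k::field) \<Rightarrow> bool" where
  "is_binomial p \<longleftrightarrow> (\<exists>u v. p = binom_x u v)"

definition circuits :: "('e \<Rightarrow> ('v \<Rightarrow> int)) \<Rightarrow> (('e \<Rightarrow>\<^sub>0 nat) \<Rightarrow>\<^sub>0 'k::field) set" where
  "circuits a = {C. is_binomial C \<and> irreducible C \<and> C \<in> toric_ideal a \<and>
      (\<forall>B :: (('e \<Rightarrow>\<^sub>0 nat) \<Rightarrow>\<^sub>0 'k). is_binomial B \<and> B \<noteq> 0 \<and> B \<in> toric_ideal a \<and> vars B \<subseteq> vars C \<longrightarrow> vars B = vars C)}"

definition supp_vecs :: "('e \<Rightarrow> ('v \<Rightarrow> int)) \<Rightarrow> (('e \<Rightarrow>\<^sub>0 nat) \<Rightarrow>\<^sub>0 'k::zero) \<Rightarrow> ('v \<Rightarrow> int) set" where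
  "supp_vecs a C = a ` vars C"

definition int_span :: "('v \<Rightarrow> int) set \<Rightarrow> ('v \<Rightarrow> int) set" where
  "int_span S = {x. \<exists>c :: ('v \<Rightarrow> int) \<Rightarrow> int. x = (\<lambda>i. \<Sum>s\<in>S. c s * s i)}"

definition real_span_int :: "('v \<Rightarrow> int) set \<Rightarrow> ('v \<Rightarrow> int) set" where
  "real_span_int S = {x. \<exists>c :: ('v \<Rightarrow> int) \<Rightarrow> real. \<forall>i. real_of_int (x i) = (\<Sum>s\<in>S. c s * real_of_int (s i))}"

definition lattice_index :: "('v \<Rightarrow> int) set \<Rightarrow> ('v \<Rightarrow> int) set \<Rightarrow> nat" where
  "lattice_index L1 L2 = card ((\<lambda>x. (\<lambda>y. (\<lambda>i. x i + y i)) ` L2) ` L1)"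

definition circuit_index :: "('e \<Rightarrow> ('v \<Rightarrow> int)) \<Rightarrow> (('e \<Rightarrow>\<^sub>0 nat) \<Rightarrow>\<^sub>0 'k::zero) \<Rightarrow> nat" where
  "circuit_index a C = lattice_index
      (real_span_int (supp_vecs a C) \<inter> int_span (range a))
      (int_span (supp_vecs a C))"

definition total_degree :: "(('e \<Rightarrow>\<^sub>0 nat) \<Rightarrow>\<^sub>0 'k::zero) \<Rightarrow> nat" where
  "total_degree p = Max (insert 0 ((\<lambda>u. \<Sum>e\<in>Poly_Mapping.keys u. Poly_Mapping.lookup u e) ` Poly_Mapping.keys p))"

definition true_degree :: "('e \<Rightarrow> ('v \<Rightarrow> int)) \<Rightarrow> (('e \<Rightarrow>\<^sub>0 nat) \<Rightarrow>\<^sub>0 'k::zero) \<Rightarrow> nat" where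
  "true_degree a C = total_degree C * circuit_index a C"

end

theory Submission
  imports Defs
begin


lemma weight_superset:
  assumes "finite F" "Poly_Mapping.keys u \<subseteq> F"
  shows "weight a u i = (\<Sum>e\<in>F. int (Poly_Mapping.lookup u e) * a e i)"
  unfolding weight_def
  by (rule sum.mono_neutral_left) (auto simp: assms in_keys_iff)

lemma weight_add: "weight a (l + m) = (\<lambda>i. weight a l i + weight a m i)"
proof
  fix i
  let ?F = "Poly_Mapping.keys l \<union> Poly_Mapping.keys m"
  have f: "finite ?F" by simp
  have "weight a (l+m) i = (\<Sum>e\<in>?F. int (Poly_Mapping.lookup (l+m) e) * a e i)"
    by (rule weight_superset[OF f]) (meson Poly_Mapping.keys_add)
  also have "\<dots> = (\<Sum>e\<in>?F. int (Poly_Mapping.lookup l e) * a e i) + (\<Sum>e\<in>?F. int (Poly_Mapping.lookup m e) * a e i)"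
    by (simp add: lookup_add sum.distrib algebra_simps)
  also have "\<dots> = weight a l i + weight a m i"
    by (simp add: weight_superset[OF f])
  finally show "weight a (l+m) i = weight a l i + weight a m i" .
qed

definition Phi :: "('e \<Rightarrow> ('v \<Rightarrow> int)) \<Rightarrow> (('e \<Rightarrow>\<^sub>0 nat) \<Rightarrow>\<^sub>0 'k::field) \<Rightarrow> ('v \<Rightarrow> int) \<Rightarrow> 'k" where
  "Phi a p w = (\<Sum>m\<in>Poly_Mapping.keys p. if weight a m = w then Poly_Mapping.lookup p m else 0)"

lemma Phi_superset:
  assumes "finite F" "Poly_Mapping.keys p \<subseteq> F"
  shows "Phi a p w = (\<Sum>m\<in>F. if weight a m = w then Poly_Mapping.lookup p m else 0)"
  unfolding Phi_def
  by (rule sum.mono_neutral_left) (auto simp: assms in_keys_iff)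

lemma Phi_add: "Phi a (p + q) w = Phi a p w + Phi a q w"
proof -
  let ?F = "Poly_Mapping.keys p \<union> Poly_Mapping.keys q"
  have f: "finite ?F" by simp
  have "Phi a (p+q) w = (\<Sum>m\<in>?F. if weight a m = w then Poly_Mapping.lookup (p+q) m else 0)"
    by (rule Phi_superset[OF f]) (meson Poly_Mapping.keys_add)
  also have "\<dots> = (\<Sum>m\<in>?F. if weight a m = w then Poly_Mapping.lookup p m else 0) + (\<Sum>m\<in>?F. if weight a m = w then Poly_Mapping.lookup q m else 0)"
    by (simp add: lookup_add sum.distrib[symmetric] if_distrib cong: if_cong)
  also have "\<dots> = Phi a p w + Phi a q w"
    by (simp add: Phi_superset[OF f])
  finally show ?thesis .
qed

lemma Phi_diff: "Phi a (p - q) w = Phi a p w - Phi a q w"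
  using Phi_add[of a "p - q" q w] by simp

lemma Phi_zero[simp]: "Phi a 0 w = 0" by (simp add: Phi_def)

lemma Phi_sum: "Phi a (\<Sum>i\<in>I. f i) w = (\<Sum>i\<in>I. Phi a (f i) w)"
  by (induction I rule: infinite_finite_induct) (auto simp: Phi_add)

lemma Phi_single: "Phi a (Poly_Mapping.single m c) w = (if weight a m = w then c else 0)"
  by (cases "c = 0") (auto simp: Phi_def)

lemma pm_expand: "p = (\<Sum>m\<in>Poly_Mapping.keys p. Poly_Mapping.single m (Poly_Mapping.lookup p m))"
proof (rule poly_mapping_eqI)
  fix k
  have "Poly_Mapping.lookup (\<Sum>m\<in>Poly_Mapping.keys p. Poly_Mapping.single m (Poly_Mapping.lookup p m)) k
     = (\<Sum>m\<in>Poly_Mapping.keys p. Poly_Mapping.lookup (Poly_Mapping.single m (Poly_Mapping.lookup p m)) k)"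
    by (simp add: lookup_sum)
  also have "\<dots> = Poly_Mapping.lookup p k"
    by (auto simp: lookup_single when_def in_keys_iff)
  finally show "Poly_Mapping.lookup p k = Poly_Mapping.lookup (\<Sum>m\<in>Poly_Mapping.keys p. Poly_Mapping.single m (Poly_Mapping.lookup p m)) k" by simp
qed

lemma Phi_mult:
  assumes "\<And>w. Phi a p w = 0"
  shows "Phi a (r * p) w = 0"
proof -
  have "r * p = (\<Sum>l\<in>Poly_Mapping.keys r. Poly_Mapping.single l (Poly_Mapping.lookup r l)) *
                (\<Sum>m\<in>Poly_Mapping.keys p. Poly_Mapping.single m (Poly_Mapping.lookup p m))"
    using pm_expand[of r] pm_expand[of p] by simp
  also have "\<dots> = (\<Sum>l\<in>Poly_Mapping.keys r. \<Sum>m\<in>Poly_Mapping.keys p.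
        Poly_Mapping.single (l+m) (Poly_Mapping.lookup r l * Poly_Mapping.lookup p m))"
    by (simp add: sum_distrib_left sum_distrib_right mult_single) (rule sum.swap)
  finally have rp: "r * p = \<dots>" .
  have "Phi a (r*p) w = (\<Sum>l\<in>Poly_Mapping.keys r. \<Sum>m\<in>Poly_Mapping.keys p.
        (if weight a (l+m) = w then Poly_Mapping.lookup r l * Poly_Mapping.lookup p m else 0))"
    by (simp add: rp Phi_sum Phi_single)
  also have "\<dots> = (\<Sum>l\<in>Poly_Mapping.keys r. Poly_Mapping.lookup r l * Phi a p (\<lambda>i. w i - weight a l i))"
  proof (rule sum.cong[OF refl])
    fix l
    have eq: "\<And>m. (weight a (l+m) = w) = (weight a m = (\<lambda>i. w i - weight a l i))"
      by (auto simp: weight_add fun_eq_iff algebra_simps)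
    show "(\<Sum>m\<in>Poly_Mapping.keys p. (if weight a (l+m) = w then Poly_Mapping.lookup r l * Poly_Mapping.lookup p m else 0))
       = Poly_Mapping.lookup r l * Phi a p (\<lambda>i. w i - weight a l i)"
      by (simp add: eq Phi_def sum_distrib_left if_distrib cong: if_cong)
  qed
  also have "\<dots> = 0" using assms by simp
  finally show ?thesis .
qed

lemma toric_Phi: "p \<in> toric_ideal a \<Longrightarrow> Phi a p w = 0"
proof (induction p arbitrary: w rule: toric_ideal.induct)
  case (gen u v)
  then show ?case
    by (simp add: binom_x_def monom_x_def Phi_diff Phi_single)
next
  case (add p q) then show ?case by (simp add: Phi_add)
next
  case (mult p r) then show ?case by (simp add: Phi_mult)
qed simp



lemma zs_zero: "(\<lambda>i. 0) \<in> int_span S"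
  unfolding int_span_def by (rule CollectI, rule exI[of _ "\<lambda>_. 0"]) simp

lemma zs_mem: assumes "finite S" "s \<in> S" shows "s \<in> int_span S"
  unfolding int_span_def
proof (rule CollectI, rule exI[of _ "\<lambda>t. if t = s then 1 else 0"])
  show "s = (\<lambda>i. \<Sum>t\<in>S. (if t = s then 1 else 0) * t i)"
  proof
    fix i
    have "(\<Sum>t\<in>S. (if t = s then 1 else 0) * t i) = (\<Sum>t\<in>S. if s = t then s i else 0)"
      by (rule sum.cong) auto
    also have "\<dots> = s i" using assms by (simp add: sum.delta)
    finally show "s i = (\<Sum>t\<in>S. (if t = s then 1 else 0) * t i)" by simp
  qed
qed

lemma zs_add: assumes "y \<in> int_span S" "z \<in> int_span S" shows "(\<lambda>i. y i + z i) \<in> int_span S"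
proof -
  obtain c1 where c1: "y = (\<lambda>i. \<Sum>s\<in>S. c1 s * s i)" using assms(1) unfolding int_span_def by blast
  obtain c2 where c2: "z = (\<lambda>i. \<Sum>s\<in>S. c2 s * s i)" using assms(2) unfolding int_span_def by blast
  show ?thesis unfolding int_span_def
    by (rule CollectI, rule exI[of _ "\<lambda>s. c1 s + c2 s"]) (simp add: c1 c2 sum.distrib algebra_simps)
qed

lemma zs_scale: assumes "y \<in> int_span S" shows "(\<lambda>i. k * y i) \<in> int_span S"
proof -
  obtain c1 where c1: "y = (\<lambda>i. \<Sum>s\<in>S. c1 s * s i)" using assms(1) unfolding int_span_def by blast
  show ?thesis unfolding int_span_def
    by (rule CollectI, rule exI[of _ "\<lambda>s. k * c1 s"]) (simp add: c1 sum_distrib_left algebra_simps)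
qed

lemma zs_diff: assumes "y \<in> int_span S" "z \<in> int_span S" shows "(\<lambda>i. y i - z i) \<in> int_span S"
  using zs_add[OF assms(1) zs_scale[OF assms(2), of "-1"]] by simp

lemma zs_sum: assumes "finite I" "\<And>j. j \<in> I \<Longrightarrow> f j \<in> int_span S"
  shows "(\<lambda>i. \<Sum>j\<in>I. f j i) \<in> int_span S"
  using assms
proof (induction I rule: finite_induct)
  case empty then show ?case by (simp add: zs_zero)
next
  case (insert x F)
  then show ?case using zs_add[of "f x" S "\<lambda>i. \<Sum>j\<in>F. f j i"] by simp
qed

inductive walk :: "('e \<Rightarrow> 'v set) \<Rightarrow> 'e set \<Rightarrow> 'v \<Rightarrow> 'v \<Rightarrow> bool \<Rightarrow> bool" for ends E where
  wrefl: "walk ends E x x False"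
| wstep: "walk ends E x p b \<Longrightarrow> e \<in> E \<Longrightarrow> ends e = {p, q} \<Longrightarrow> walk ends E x q (\<not> b)"

lemma walk_append: "walk ends E y z b2 \<Longrightarrow> walk ends E x y b1 \<Longrightarrow> walk ends E x z (b1 \<noteq> b2)"
proof (induction rule: walk.induct)
  case (wrefl x) then show ?case by simp
next
  case (wstep y' p b e q)
  have "walk ends E x p (b1 \<noteq> b)" using wstep.IH wstep.prems by blast
  from walk.wstep[OF this wstep.hyps(2,3)] show ?case by (metis (full_types))
qed

lemma walk_rev: "walk ends E x y b \<Longrightarrow> walk ends E y x b"
proof (induction rule: walk.induct)
  case (wrefl x) then show ?case by (rule walk.wrefl)
next
  case (wstep x p b e q)
  have "walk ends E q p True"
    using walk.wstep[OF walk.wrefl[of ends E q] wstep.hyps(2)] wstep.hyps(3) by (auto simp: insert_commute)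
  from walk_append[OF wstep.IH this] show ?case by simp
qed

definition unitv :: "'v \<Rightarrow> 'v \<Rightarrow> int" where "unitv w = (\<lambda>i. if i = w then 1 else 0)"

lemma edge_vec_split: assumes "ends e = {p, q}" "p \<noteq> q"
  shows "edge_vec ends e = (\<lambda>i. unitv p i + unitv q i)"
  using assms by (auto simp: edge_vec_def unitv_def fun_eq_iff)

lemma walk_span:
  assumes fin: "finite E" and c2: "\<forall>e. card (ends e) = 2"
  shows "walk ends E r w b \<Longrightarrow> (\<lambda>i. unitv w i - (if b then -1 else 1) * unitv r i) \<in> int_span (edge_vec ends ` E)"
proof (induction rule: walk.induct)
  case (wrefl x) then show ?case using zs_zero by simp
next
  case (wstep x p b e q)
  have pq: "p \<noteq> q" using c2[rule_format, of e] wstep.hyps(3) by auto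
  have ev: "edge_vec ends e \<in> int_span (edge_vec ends ` E)"
    using zs_mem[of "edge_vec ends ` E"] fin wstep.hyps(2) by blast
  have "(\<lambda>i. edge_vec ends e i - (unitv p i - (if b then -1 else 1) * unitv x i)) \<in> int_span (edge_vec ends ` E)"
    by (rule zs_diff[OF ev wstep.IH])
  then show ?case
    by (cases b) (simp_all add: edge_vec_split[of ends e p q, OF wstep.hyps(3) pq] algebra_simps)
qed



lemma sum_edge_vec:
  assumes "finite (UNIV::'v set)" "card (ends e) = 2"
  shows "(\<Sum>i\<in>(UNIV::'v set). edge_vec ends e i) = 2"
proof -
  have "(\<Sum>i\<in>(UNIV::'v set). edge_vec ends e i) = (\<Sum>i\<in>UNIV. if i \<in> ends e then 1 else 0)"
    by (simp add: edge_vec_def)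
  also have "\<dots> = int (card (ends e))"
    using assms(1) by (simp add: sum.If_cases)
  finally show ?thesis using assms(2) by simp
qed

lemma even_span:
  assumes finV: "finite (UNIV::'v set)" and c2: "\<forall>e. card (ends e) = 2"
    and S: "S \<subseteq> range (edge_vec ends)" and y: "y \<in> int_span S"
  shows "even (\<Sum>i\<in>(UNIV::'v set). y i)"
proof -
  obtain c where c: "y = (\<lambda>i. \<Sum>s\<in>S. c s * s i)" using y unfolding int_span_def by blast
  have "(\<Sum>i\<in>(UNIV::'v set). y i) = (\<Sum>s\<in>S. c s * (\<Sum>i\<in>UNIV. s i))"
    by (simp add: c sum_distrib_left) (rule sum.swap)
  also have "\<dots> = (\<Sum>s\<in>S. 2 * c s)"
  proof (rule sum.cong[OF refl])
    fix s assume "s \<in> S"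
    then obtain e where "s = edge_vec ends e" using S by blast
    then show "c s * (\<Sum>i\<in>UNIV. s i) = 2 * c s" using sum_edge_vec[of ends e, OF finV c2[rule_format, of e]] by simp
  qed
  also have "\<dots> = 2 * (\<Sum>s\<in>S. c s)" by (simp add: sum_distrib_left)
  finally show ?thesis by simp
qed

lemma walk_uniq:
  assumes "\<not> walk ends E r r True" "walk ends E r w b1" "walk ends E r w b2"
  shows "b1 = b2"
proof (rule ccontr)
  assume "b1 \<noteq> b2"
  from walk_append[OF walk_rev[OF assms(3)] assms(2)] have "walk ends E r r (b1 \<noteq> b2)" .
  with \<open>b1 \<noteq> b2\<close> assms(1) show False by simp
qed

lemma lattice_main:
  fixes E :: "'e set" and ends :: "'e \<Rightarrow> 'v set"
  assumes finV: "finite (UNIV::'v set)" and finE: "finite E"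
   and c2: "\<forall>e. card (ends e) = 2"
   and r: "r \<in> \<Union>(ends ` E)"
   and conn: "\<forall>w\<in>\<Union>(ends ` E). \<exists>b. walk ends E r w b"
   and xr: "x \<in> real_span_int (edge_vec ends ` E)"
   and xz: "x \<in> int_span (range (edge_vec ends))"
  shows "x \<in> int_span (edge_vec ends ` E)"
proof -
  define S where "S = edge_vec ends ` E"
  define W where "W = \<Union>(ends ` E)"
  have finW: "finite W" using finV by (meson finite_subset subset_UNIV)
  have finS: "finite S" using finE S_def by simp
  obtain c where cx: "\<forall>i. real_of_int (x i) = (\<Sum>s\<in>S. c s * real_of_int (s i))"
    using xr unfolding real_span_int_def S_def by blast
  have supp: "x i = 0" if "i \<notin> W" for i
  proof -
    have "(\<Sum>s\<in>S. c s * real_of_int (s i)) = 0"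
      using that by (intro sum.neutral) (auto simp: S_def W_def edge_vec_def)
    then show ?thesis using cx[rule_format, of i] by simp
  qed
  define \<beta> where "\<beta> w = (SOME b. walk ends E r w b)" for w
  have h\<beta>: "walk ends E r w (\<beta> w)" if "w \<in> W" for w
    unfolding \<beta>_def using conn that W_def by (metis someI_ex)
  define \<sigma> :: "'v \<Rightarrow> int" where "\<sigma> w = (if \<beta> w then -1 else 1)" for w
  define k where "k = (\<Sum>w\<in>W. x w * \<sigma> w)"
  have key1: "(\<lambda>i. x i - k * unitv r i) \<in> int_span S"
  proof -
    have "(\<lambda>i. \<Sum>w\<in>W. (\<lambda>i. x w * (unitv w i - \<sigma> w * unitv r i)) i) \<in> int_span S"
    proof (rule zs_sum[OF finW])
      fix w assume "w \<in> W"
      from walk_span[OF finE c2 h\<beta>[OF this]]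
      have "(\<lambda>i. unitv w i - \<sigma> w * unitv r i) \<in> int_span S" by (simp add: S_def \<sigma>_def)
      from zs_scale[OF this, of "x w"] show "(\<lambda>i. x w * (unitv w i - \<sigma> w * unitv r i)) \<in> int_span S" .
    qed
    moreover have "(\<lambda>i. \<Sum>w\<in>W. (\<lambda>i. x w * (unitv w i - \<sigma> w * unitv r i)) i) = (\<lambda>i. x i - k * unitv r i)"
    proof
      fix i
      have "(\<Sum>w\<in>W. x w * (unitv w i - \<sigma> w * unitv r i)) = (\<Sum>w\<in>W. x w * unitv w i) - (\<Sum>w\<in>W. x w * \<sigma> w) * unitv r i"
        by (simp add: right_diff_distrib sum_subtractf sum_distrib_right mult.assoc)
      also have "(\<Sum>w\<in>W. x w * unitv w i) = (\<Sum>w\<in>W. if i = w then x i else 0)"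
        by (rule sum.cong) (auto simp: unitv_def)
      also have "\<dots> = x i" using finW supp by (simp add: sum.delta)
      finally show "(\<Sum>w\<in>W. (\<lambda>i. x w * (unitv w i - \<sigma> w * unitv r i)) i) = x i - k * unitv r i"
        by (simp add: k_def)
    qed
    ultimately show ?thesis by simp
  qed
  show ?thesis
  proof (cases "walk ends E r r True")
    case True
    have two: "(\<lambda>i. unitv r i + unitv r i) \<in> int_span S"
      using walk_span[OF finE c2 True] by (simp add: S_def)
    have "even (\<Sum>i\<in>(UNIV::'v set). x i - k * unitv r i)"
      using even_span[OF finV c2 _ key1] by (auto simp: S_def)
    moreover have "(\<Sum>i\<in>(UNIV::'v set). x i - k * unitv r i) = (\<Sum>i\<in>UNIV. x i) - k"
      using finV by (simp add: sum_subtractf sum_distrib_left[symmetric] unitv_def)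
    moreover have "even (\<Sum>i\<in>(UNIV::'v set). x i)"
      using even_span[OF finV c2 _ xz] by simp
    ultimately have "even k" by simp
    then obtain j where j: "k = 2 * j" by blast
    have "(\<lambda>i. (x i - k * unitv r i) + j * (unitv r i + unitv r i)) \<in> int_span S"
      by (rule zs_add[OF key1 zs_scale[OF two]])
    moreover have "(\<lambda>i. (x i - k * unitv r i) + j * (unitv r i + unitv r i)) = x"
      by (simp add: j algebra_simps)
    ultimately show ?thesis by (simp add: S_def)
  next
    case False
    have uniq: "\<And>w b1 b2. walk ends E r w b1 \<Longrightarrow> walk ends E r w b2 \<Longrightarrow> b1 = b2"
      using walk_uniq[OF False] by blast
    have \<sigma>r: "\<sigma> r = 1" using uniq[OF h\<beta>[of r] walk.wrefl] r by (simp add: \<sigma>_def W_def)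
    have edge0: "(\<Sum>w\<in>W. real_of_int (\<sigma> w) * real_of_int (s w)) = 0" if sS: "s \<in> S" for s
    proof -
      obtain e where e: "e \<in> E" "s = edge_vec ends e" using sS S_def by blast
      obtain p q where pq: "ends e = {p, q}" "p \<noteq> q" using c2 by (meson card_2_iff)
      have pW: "p \<in> W" "q \<in> W" using e pq W_def by auto
      have "walk ends E r q (\<not> \<beta> p)" using walk.wstep[OF h\<beta>[OF pW(1)] e(1) pq(1)] .
      then have bq: "\<beta> q = (\<not> \<beta> p)" using uniq h\<beta>[OF pW(2)] by blast
      have "(\<Sum>w\<in>W. real_of_int (\<sigma> w) * real_of_int (s w)) = (\<Sum>w\<in>W. if w \<in> {p,q} then real_of_int (\<sigma> w) else 0)"
        by (rule sum.cong) (auto simp: e(2) edge_vec_def pq(1))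
      also have "\<dots> = (\<Sum>w\<in>{p,q}. real_of_int (\<sigma> w))"
        proof -
        have "W \<inter> {w. w = p \<or> w = q} = {p, q}" using pW by auto
        then show ?thesis using finW by (simp add: sum.If_cases)
      qed
      also have "\<dots> = 0" using pq(2) bq by (simp add: \<sigma>_def)
      finally show ?thesis .
    qed
    have fzero: "(\<Sum>w\<in>W. real_of_int (\<sigma> w) * (\<Sum>s\<in>S. d s * real_of_int (s w))) = 0" for d :: "('v \<Rightarrow> int) \<Rightarrow> real"
    proof -
      have "(\<Sum>w\<in>W. real_of_int (\<sigma> w) * (\<Sum>s\<in>S. d s * real_of_int (s w)))
          = (\<Sum>s\<in>S. d s * (\<Sum>w\<in>W. real_of_int (\<sigma> w) * real_of_int (s w)))"
        by (simp add: sum_distrib_left algebra_simps) (rule sum.swap)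
      also have "\<dots> = 0" using edge0 by simp
      finally show ?thesis .
    qed
    have fx: "(\<Sum>w\<in>W. real_of_int (\<sigma> w) * real_of_int (x w)) = 0"
      using fzero[of c] cx by simp
    obtain c' where c': "(\<lambda>i. x i - k * unitv r i) = (\<lambda>i. \<Sum>s\<in>S. c' s * s i)"
      using key1 unfolding int_span_def by blast
    have "(\<Sum>w\<in>W. real_of_int (\<sigma> w) * real_of_int (x w - k * unitv r w)) = 0"
      using fzero[of "\<lambda>s. real_of_int (c' s)"] fun_cong[OF c'] by simp
    moreover have "(\<Sum>w\<in>W. real_of_int (\<sigma> w) * real_of_int (x w - k * unitv r w))
        = (\<Sum>w\<in>W. real_of_int (\<sigma> w) * real_of_int (x w)) - real_of_int k * (\<Sum>w\<in>W. real_of_int (\<sigma> w) * real_of_int (unitv r w))"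
      by (simp add: algebra_simps sum_subtractf sum_distrib_left)
    moreover have "(\<Sum>w\<in>W. real_of_int (\<sigma> w) * real_of_int (unitv r w)) = 1"
      using finW r \<sigma>r by (simp add: unitv_def W_def[symmetric] if_distrib sum.delta' cong: if_cong)
    ultimately have "k = 0" using fx by simp
    then show ?thesis using key1 by (simp add: S_def)
  qed
qed



lemma binom_eq_weight:
  assumes "binom_x u v \<in> (toric_ideal a :: (('e \<Rightarrow>\<^sub>0 nat) \<Rightarrow>\<^sub>0 'k::field) set)" "u \<noteq> v"
  shows "weight a u = weight a v"
proof (rule ccontr)
  assume ne: "weight a u \<noteq> weight a v"
  have "Phi a (binom_x u v :: ('e \<Rightarrow>\<^sub>0 nat) \<Rightarrow>\<^sub>0 'k) (weight a u) = 0" by (rule toric_Phi[OF assms(1)])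
  moreover have "Phi a (binom_x u v :: ('e \<Rightarrow>\<^sub>0 nat) \<Rightarrow>\<^sub>0 'k) (weight a u) = 1"
    using ne by (simp add: binom_x_def monom_x_def Phi_diff Phi_single)
  ultimately show False by simp
qed

lemma keys_binom:
  assumes "u \<noteq> v"
  shows "Poly_Mapping.keys (binom_x u v :: ('e \<Rightarrow>\<^sub>0 nat) \<Rightarrow>\<^sub>0 'k::field) = {u, v}"
  using assms by (auto simp: binom_x_def monom_x_def in_keys_iff lookup_minus lookup_single when_def split: if_splits)

lemma vars_binom:
  assumes "u \<noteq> v"
  shows "vars (binom_x u v :: ('e \<Rightarrow>\<^sub>0 nat) \<Rightarrow>\<^sub>0 'k::field) = Poly_Mapping.keys u \<union> Poly_Mapping.keys v"
proof -
  have "Poly_Mapping.keys (binom_x u v :: ('e \<Rightarrow>\<^sub>0 nat) \<Rightarrow>\<^sub>0 'k) = {u, v}" by (rule keys_binom[OF assms])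
  then show ?thesis by (simp add: vars_def)
qed

lemma binom_nonzero:
  assumes "u \<noteq> v"
  shows "(binom_x u v :: ('e \<Rightarrow>\<^sub>0 nat) \<Rightarrow>\<^sub>0 'k::field) \<noteq> 0"
  using keys_binom[OF assms, where 'k='k] by force

lemma binom_same: "(binom_x u u :: ('e \<Rightarrow>\<^sub>0 nat) \<Rightarrow>\<^sub>0 'k::field) = 0"
  by (simp add: binom_x_def)

definition res :: "'e set \<Rightarrow> ('e \<Rightarrow>\<^sub>0 nat) \<Rightarrow> ('e \<Rightarrow>\<^sub>0 nat)" where
  "res T u = Abs_poly_mapping (\<lambda>e. if e \<in> T then Poly_Mapping.lookup u e else 0)"

lemma lookup_res: "Poly_Mapping.lookup (res T u) e = (if e \<in> T then Poly_Mapping.lookup u e else 0)"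
proof -
  have "finite {e. (if e \<in> T then Poly_Mapping.lookup u e else 0) \<noteq> 0}"
    by (rule finite_subset[OF _ finite_lookup[of u]]) auto
  then show ?thesis unfolding res_def by simp
qed

lemma keys_res: "Poly_Mapping.keys (res T u) = Poly_Mapping.keys u \<inter> T"
  by (auto simp: in_keys_iff lookup_res split: if_splits)

lemma weight_res:
  assumes ku: "Poly_Mapping.keys u \<subseteq> V"
    and cl: "\<forall>e\<in>V. ends e \<subseteq> R \<or> ends e \<inter> R = {}"
  shows "weight (edge_vec ends) (res {e. ends e \<subseteq> R} u) i = (if i \<in> R then weight (edge_vec ends) u i else 0)"
proof -
  have "weight (edge_vec ends) (res {e. ends e \<subseteq> R} u) i
      = (\<Sum>e\<in>Poly_Mapping.keys u. int (Poly_Mapping.lookup (res {e. ends e \<subseteq> R} u) e) * edge_vec ends e i)"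
    by (rule weight_superset) (auto simp: keys_res)
  also have "\<dots> = (\<Sum>e\<in>Poly_Mapping.keys u. if i \<in> R then int (Poly_Mapping.lookup u e) * edge_vec ends e i else 0)"
  proof (rule sum.cong[OF refl])
    fix e assume "e \<in> Poly_Mapping.keys u"
    then have "ends e \<subseteq> R \<or> ends e \<inter> R = {}" using cl ku by blast
    then show "int (Poly_Mapping.lookup (res {e. ends e \<subseteq> R} u) e) * edge_vec ends e i
        = (if i \<in> R then int (Poly_Mapping.lookup u e) * edge_vec ends e i else 0)"
      by (auto simp: lookup_res edge_vec_def)
  qed
  also have "\<dots> = (if i \<in> R then weight (edge_vec ends) u i else 0)"
    by (simp add: weight_def)
  finally show ?thesis .
qed

lemma connectivity:
  fixes ends :: "'e \<Rightarrow> 'v set" and u v :: "'e \<Rightarrow>\<^sub>0 nat"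
  assumes c2: "\<forall>e. card (ends e) = 2"
    and uv: "u \<noteq> v"
    and wt: "weight (edge_vec ends) u = weight (edge_vec ends) v"
    and V: "V = Poly_Mapping.keys u \<union> Poly_Mapping.keys v"
    and minimal: "\<forall>B :: ('e \<Rightarrow>\<^sub>0 nat) \<Rightarrow>\<^sub>0 'k::field. is_binomial B \<and> B \<noteq> 0 \<and> B \<in> toric_ideal (edge_vec ends) \<and> vars B \<subseteq> V \<longrightarrow> vars B = V"
    and r: "r \<in> \<Union>(ends ` V)"
  shows "\<forall>w\<in>\<Union>(ends ` V). \<exists>b. walk ends V r w b"
proof (rule ccontr)
  assume "\<not> ?thesis"
  then obtain w0 e2 where e2: "e2 \<in> V" "w0 \<in> ends e2" and w0: "\<forall>b. \<not> walk ends V r w0 b" by blast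
  obtain e0 where e0: "e0 \<in> V" "r \<in> ends e0" using r by blast
  define R where "R = {w. \<exists>b. walk ends V r w b}"
  have rR: "r \<in> R" unfolding R_def using walk.wrefl[of ends V r] by blast
  have w0R: "w0 \<notin> R" unfolding R_def using w0 by blast
  have cl: "\<forall>e\<in>V. ends e \<subseteq> R \<or> ends e \<inter> R = {}"
  proof
    fix e assume eV: "e \<in> V"
    obtain p q where pq: "ends e = {p, q}" using c2 by (meson card_2_iff)
    show "ends e \<subseteq> R \<or> ends e \<inter> R = {}"
    proof (cases "p \<in> R \<or> q \<in> R")
      case True
      then show ?thesis
      proof
        assume "p \<in> R"
        then obtain b where "walk ends V r p b" unfolding R_def by blast
        from walk.wstep[OF this eV pq] have "q \<in> R" unfolding R_def by blast
        with \<open>p \<in> R\<close> show ?thesis using pq by auto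
      next
        assume "q \<in> R"
        then obtain b where "walk ends V r q b" unfolding R_def by blast
        from walk.wstep[OF this eV, of p] pq have "p \<in> R" unfolding R_def by (auto simp: insert_commute)
        with \<open>q \<in> R\<close> show ?thesis using pq by auto
      qed
    next
      case False then show ?thesis using pq by auto
    qed
  qed
  have cl2: "\<forall>e\<in>V. ends e \<subseteq> -R \<or> ends e \<inter> -R = {}" using cl by blast
  define T1 where "T1 = {e. ends e \<subseteq> R}"
  define T2 where "T2 = {e. ends e \<subseteq> -R}"
  have ku: "Poly_Mapping.keys u \<subseteq> V" and kv: "Poly_Mapping.keys v \<subseteq> V" using V by auto
  have w1: "weight (edge_vec ends) (res T1 u) = weight (edge_vec ends) (res T1 v)"
    unfolding T1_def using weight_res[OF ku cl] weight_res[OF kv cl] wt by (auto simp: fun_eq_iff)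
  have w2: "weight (edge_vec ends) (res T2 u) = weight (edge_vec ends) (res T2 v)"
    unfolding T2_def using weight_res[OF ku cl2] weight_res[OF kv cl2] wt by (auto simp: fun_eq_iff)
  have nonempty: "ends e \<noteq> {}" for e using c2 by (metis card.empty zero_neq_numeral)
  have split: "e \<in> T1 \<or> e \<in> T2" if "e \<in> V" for e using cl that unfolding T1_def T2_def by blast
  have "res T1 u \<noteq> res T1 v \<or> res T2 u \<noteq> res T2 v"
  proof (rule ccontr)
    assume "\<not> ?thesis"
    then have h: "res T1 u = res T1 v" "res T2 u = res T2 v" by auto
    have "Poly_Mapping.lookup u e = Poly_Mapping.lookup v e" for e
    proof (cases "e \<in> V")
      case True
      then show ?thesis using split[OF True] h[THEN arg_cong[where f="\<lambda>p. Poly_Mapping.lookup p e"]]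
        by (auto simp: lookup_res)
    next
      case False
      then have "e \<notin> Poly_Mapping.keys u" "e \<notin> Poly_Mapping.keys v" using V by auto
      then show ?thesis by (simp add: in_keys_iff)
    qed
    then have "u = v" by (rule poly_mapping_eqI)
    with uv show False by simp
  qed
  moreover have False if T: "T = T1 \<or> T = T2" and ne: "res T u \<noteq> res T v"
    and wT: "weight (edge_vec ends) (res T u) = weight (edge_vec ends) (res T v)" for T
  proof -
    let ?B = "binom_x (res T u) (res T v) :: ('e \<Rightarrow>\<^sub>0 nat) \<Rightarrow>\<^sub>0 'k"
    have "is_binomial ?B" by (auto simp: is_binomial_def)
    moreover have "?B \<noteq> 0" by (rule binom_nonzero[OF ne])
    moreover have "?B \<in> toric_ideal (edge_vec ends)" by (rule toric_ideal.gen[OF wT])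
    moreover have vB: "vars ?B = (Poly_Mapping.keys u \<union> Poly_Mapping.keys v) \<inter> T"
      using vars_binom[OF ne, where 'k='k] by (auto simp: keys_res)
    moreover have "vars ?B \<subseteq> V" using vB V by auto
    ultimately have "vars ?B = V" using minimal by blast
    then have "V \<subseteq> T" using vB V by auto
    moreover have "e2 \<notin> T1" using e2 w0R T1_def by auto
    moreover have "e0 \<notin> T2" using e0 rR T2_def by auto
    ultimately show False using T e0 e2 by auto
  qed
  ultimately show False using w1 w2 by blast
qed



lemma index_one:
  assumes sub: "L1 \<subseteq> int_span S" and z: "(\<lambda>i. 0) \<in> L1"
  shows "lattice_index L1 (int_span S) = 1"
proof -
  have tr: "(\<lambda>y. (\<lambda>i. x i + y i)) ` int_span S = int_span S" if "x \<in> int_span S" for x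
  proof
    show "(\<lambda>y. (\<lambda>i. x i + y i)) ` int_span S \<subseteq> int_span S" using zs_add[OF that] by blast
    show "int_span S \<subseteq> (\<lambda>y. (\<lambda>i. x i + y i)) ` int_span S"
    proof
      fix z assume zS: "z \<in> int_span S"
      have "(\<lambda>i. z i - x i) \<in> int_span S" by (rule zs_diff[OF zS that])
      moreover have "z = (\<lambda>i. x i + (z i - x i))" by simp
      ultimately show "z \<in> (\<lambda>y. (\<lambda>i. x i + y i)) ` int_span S" by (intro image_eqI[where x="\<lambda>i. z i - x i"]) auto
    qed
  qed
  have "(\<lambda>x. (\<lambda>y. (\<lambda>i. x i + y i)) ` int_span S) ` L1 = {int_span S}"
    using tr sub z by blast
  then show ?thesis unfolding lattice_index_def by simp
qed

theorem theorem3p1: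
  fixes ends :: "'e \<Rightarrow> 'v set"
    and C :: "('e \<Rightarrow>\<^sub>0 nat) \<Rightarrow>\<^sub>0 'k::field"
  assumes "simple_connected_graph ends"
    and "C \<in> circuits (edge_vec ends)"
  shows "circuit_index (edge_vec ends) C = 1 \<and>
         true_degree (edge_vec ends) C = total_degree C"
proof -
  have finV: "finite (UNIV :: 'v set)" and finE: "finite (UNIV :: 'e set)"
    and c2: "\<forall>e. card (ends e) = 2"
    using assms(1) unfolding simple_connected_graph_def by auto
  have bin: "is_binomial C" and irr: "irreducible C" and CI: "C \<in> toric_ideal (edge_vec ends)"
    and minimal: "\<forall>B :: ('e \<Rightarrow>\<^sub>0 nat) \<Rightarrow>\<^sub>0 'k. is_binomial B \<and> B \<noteq> 0 \<and> B \<in> toric_ideal (edge_vec ends) \<and> vars B \<subseteq> vars C \<longrightarrow> vars B = vars C"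
    using assms(2) unfolding circuits_def by auto
  obtain u v where C: "C = binom_x u v" using bin unfolding is_binomial_def by blast
  have uv: "u \<noteq> v"
  proof
    assume "u = v"
    then have "C = 0" using C binom_same[of u, where 'k='k] by simp
    then show False using irr by simp
  qed
  have wt: "weight (edge_vec ends) u = weight (edge_vec ends) v"
    using binom_eq_weight[of u v "edge_vec ends"] CI C uv by blast
  define V where "V = vars C"
  have V: "V = Poly_Mapping.keys u \<union> Poly_Mapping.keys v"
    unfolding V_def C by (rule vars_binom[OF uv])
  have "V \<noteq> {}" using V uv by auto
  then obtain e0 where e0: "e0 \<in> V" by blast
  have "ends e0 \<noteq> {}" using c2 by (metis card.empty zero_neq_numeral)
  then obtain r where r: "r \<in> ends e0" by blast
  have rW: "r \<in> \<Union>(ends ` V)" using e0 r by blast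
  have conn: "\<forall>w\<in>\<Union>(ends ` V). \<exists>b. walk ends V r w b"
    by (rule connectivity[where 'k='k, OF c2 uv wt V _ rW]) (use minimal V_def in blast)
  have finVs: "finite V" using finE by (meson finite_subset subset_UNIV)
  have sub: "real_span_int (supp_vecs (edge_vec ends) C) \<inter> int_span (range (edge_vec ends))
      \<subseteq> int_span (supp_vecs (edge_vec ends) C)"
    using lattice_main[OF finV finVs c2 rW conn] unfolding supp_vecs_def V_def by blast
  have z: "(\<lambda>i. 0) \<in> real_span_int (supp_vecs (edge_vec ends) C) \<inter> int_span (range (edge_vec ends))"
    using zs_zero unfolding real_span_int_def by (auto intro!: exI[of _ "\<lambda>_. 0"])
  have "circuit_index (edge_vec ends) C = 1"
    unfolding circuit_index_def by (rule index_one[OF sub z])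
  then show ?thesis by (simp add: true_degree_def)
qed


end
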